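(* Let $n\ge 3$, $q=\frac{2n}{n-2}$, $\kappa=\frac{n-1}{n}$. Identify $S^1$ with $[-\pi,\pi]$ with endpoints identified, and let $\lambda=-1$ on $(-\pi,0)$, $\lambda=1$ on $(0,\pi)$. Let $N$ be a smooth positive function on $S^1$, $\gamma_N=-\frac{\int_{S^1}\lambda N}{\int_{S^1}N}$, and let $t,\eta,\mu\in\mathbb{R}$ and $\epsilon\in\mathbb{R}$. For $d>0$ consider $$-2\kappa q\,d^{-2q/n}\psi''-2\eta^2d^{-2q}\psi^{-q-1}-\kappa\big[(\gamma_N+\lambda)(1+\epsilon)+d^{-q}\mu\big]^2\psi^{-q-1}+\kappa(t+\lambda)^2\psi^{q-1}=0\quad\text{on }S^1.\qquad(\ast)$$ Suppose $\epsilon>0$. If $t$ is sufficiently close to $\gamma_N$ and $\mu=0$, then there is no $d>0$ for which $(\ast)$ has a positive solution $\psi\in W^{2,p}(S^1)$ ($p>1$) with $\psi(0)=1$.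
   Context: Equation $(\ast)$ is the reduction, for the data above, of the modified constraint system $R_h-|K|_h^2+(\mathrm{tr}_hK)^2=0$, $\mathrm{div}_hK-(1+\epsilon)\,d\,\mathrm{tr}_hK=0$; solutions of that modified reduced system correspond to pairs $(d,\psi)$ with $d>0$, $\psi$ a positive solution of $(\ast)$ and $\psi(0)=1$. *)

theory Defs
  imports "HOL-Analysis.Analysis"
begin

text \<open>Functions on the circle S^1 = [-pi,pi] with endpoints identified are
represented as 2*pi-periodic functions on the real line.\<close>

definition periodic2pi :: "(real \<Rightarrow> real) \<Rightarrow> bool" where
  "periodic2pi f \<longleftrightarrow> (\<forall>x. f (x + 2 * pi) = f x)"

text \<open>lambda = -1 on (-pi,0), 1 on (0,pi) (extended periodically; its value at the
two points 0, pi is irrelevant, set to 0).\<close>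
definition lam :: "real \<Rightarrow> real" where
  "lam x = (if sin x < 0 then -1 else if sin x > 0 then 1 else 0)"

definition smooth_circle :: "(real \<Rightarrow> real) \<Rightarrow> bool" where
  "smooth_circle f \<longleftrightarrow> periodic2pi f \<and> (\<forall>k x. ((deriv ^^ k) f) differentiable (at x))"

definition gammaN :: "(real \<Rightarrow> real) \<Rightarrow> real" where
  "gammaN N = - (integral {-pi..pi} (\<lambda>x. lam x * N x)) / integral {-pi..pi} N"

text \<open>psi in W^{2,p}(S^1) (p > 1): in one dimension, psi is (represented by) a
periodic C^1 function whose derivative psi1 is absolutely continuous, i.e. an
indefinite integral of some psi2, with psi2 in L^p(S^1); psi2 is the weak second
derivative.\<close>
definition W2p_circle_with :: "real \<Rightarrow> (real \<Rightarrow> real) \<Rightarrow> (real \<Rightarrow> real) \<Rightarrow> bool" where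
  "W2p_circle_with p psi psi2 \<longleftrightarrow> periodic2pi psi \<and>
     psi2 \<in> borel_measurable lborel \<and>
     set_integrable lborel {-pi..pi} (\<lambda>x. \<bar>psi2 x\<bar> powr p) \<and>
     (\<exists>psi1. (\<forall>x. (psi has_real_derivative psi1 x) (at x)) \<and>
            (\<forall>a b. a \<le> b \<longrightarrow> (psi2 has_integral (psi1 b - psi1 a)) {a..b}))"

definition eqn_lhs :: "nat \<Rightarrow> (real \<Rightarrow> real) \<Rightarrow> real \<Rightarrow> real \<Rightarrow> real \<Rightarrow> real \<Rightarrow> real
    \<Rightarrow> (real \<Rightarrow> real) \<Rightarrow> (real \<Rightarrow> real) \<Rightarrow> real \<Rightarrow> real" where
  "eqn_lhs n N t eta mu eps d psi psi2 x =
     (let q = 2 * real n / (real n - 2); \<kappa> = (real n - 1) / real n in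
       - 2 * \<kappa> * q * d powr (- 2 * q / real n) * psi2 x
       - 2 * eta\<^sup>2 * d powr (- 2 * q) * psi x powr (- q - 1)
       - \<kappa> * ((gammaN N + lam x) * (1 + eps) + d powr (- q) * mu)\<^sup>2 * psi x powr (- q - 1)
       + \<kappa> * (t + lam x)\<^sup>2 * psi x powr (q - 1))"

definition pos_W2p_solution :: "nat \<Rightarrow> (real \<Rightarrow> real) \<Rightarrow> real \<Rightarrow> real \<Rightarrow> real \<Rightarrow> real \<Rightarrow> real
    \<Rightarrow> real \<Rightarrow> (real \<Rightarrow> real) \<Rightarrow> bool" where
  "pos_W2p_solution n N t eta mu eps d p psi \<longleftrightarrow>
     (\<forall>x. psi x > 0) \<and>
     (\<exists>psi2. W2p_circle_with p psi psi2 \<and>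
        (AE x in lborel. eqn_lhs n N t eta mu eps d psi psi2 x = 0))"

end

theory Submission
  imports Defs
begin

lemma periodic_nat: "periodic2pi f \<Longrightarrow> f (x + 2*pi * real k) = f x"
proof (induction k arbitrary: x)
  case 0 then show ?case by simp
next
  case (Suc k)
  have "f (x + 2*pi * real (Suc k)) = f ((x + 2*pi * real k) + 2*pi)" by (simp add: algebra_simps)
  also have "\<dots> = f (x + 2*pi * real k)" using Suc.prems by (simp add: periodic2pi_def)
  finally show ?case using Suc by simp
qed

lemma periodic_int: assumes p: "periodic2pi f" shows "f (x + 2*pi * of_int k) = f x"
proof (cases "k \<ge> 0")
  case True
  define m where "m = nat k"
  have "k = int m" using True m_def by simp
  then show ?thesis using periodic_nat[OF p, of x m] by simp
next
  case False
  define m where "m = nat (-k)"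
  have m: "k = - int m" using False m_def by simp
  have "f x = f ((x + 2*pi * of_int k) + 2*pi * real m)" by (simp add: m)
  also have "\<dots> = f (x + 2*pi * of_int k)" using periodic_nat[OF p] by simp
  finally show ?thesis by simp
qed

lemma periodic_min:
  assumes p: "periodic2pi f" and c: "continuous_on UNIV f"
  shows "\<exists>x0. \<forall>y. f x0 \<le> f y"
proof -
  have c1: "continuous_on {-pi..pi} f" using c continuous_on_subset by blast
  have ne: "{-pi..pi} \<noteq> {}" using pi_ge_zero by simp
  obtain x0 where x0: "x0 \<in> {-pi..pi}" "\<forall>y\<in>{-pi..pi}. f x0 \<le> f y"
    using continuous_attains_inf[OF compact_Icc ne c1] by blast
  show ?thesis
  proof (intro exI allI)
    fix y :: real
    define k where "k = floor ((y + pi) / (2*pi))"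
    have k1: "of_int k \<le> (y+pi)/(2*pi)" "(y+pi)/(2*pi) < of_int k + 1"
      unfolding k_def by linarith+
    have "2*pi * of_int k \<le> y + pi" using k1(1) pi_gt_zero by (simp add: field_simps)
    moreover have "y + pi < 2*pi * (of_int k + 1)" using k1(2) pi_gt_zero by (simp add: field_simps)
    ultimately have "y - 2*pi * of_int k \<in> {-pi..pi}" by (auto simp: algebra_simps)
    hence "f x0 \<le> f (y - 2*pi * of_int k)" using x0 by blast
    also have "\<dots> = f ((y - 2*pi * of_int k) + 2*pi * of_int k)"
      using periodic_int[OF p, of "y - 2*pi * of_int k" k] by simp
    finally show "f x0 \<le> f y" by simp
  qed
qed


lemma pos_integral:
  fixes N :: "real \<Rightarrow> real"
  assumes c: "continuous_on UNIV N" and pos: "\<forall>x. N x > 0" and ab: "a < b"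
  shows "(N has_integral integral {a..b} N) {a..b}" "integral {a..b} N > 0"
proof -
  have c1: "continuous_on {a..b} N" using c continuous_on_subset by blast
  show hi: "(N has_integral integral {a..b} N) {a..b}"
    using integrable_continuous_interval[OF c1] has_integral_integral by blast
  have ne: "{a..b} \<noteq> {}" using ab by simp
  obtain x0 where x0: "x0 \<in> {a..b}" "\<forall>y\<in>{a..b}. N x0 \<le> N y"
    using continuous_attains_inf[OF compact_Icc ne c1] by blast
  have "Henstock_Kurzweil_Integration.content {a..b} *\<^sub>R N x0 \<le> integral {a..b} N"
    by (rule has_integral_le[OF has_integral_const_real hi]) (use x0 in auto)
  moreover have "Henstock_Kurzweil_Integration.content {a..b} *\<^sub>R N x0 > 0" using ab pos by simp
  ultimately show "integral {a..b} N > 0" by linarith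
qed

lemma gamma_range:
  fixes N :: "real \<Rightarrow> real"
  assumes s: "smooth_circle N" and pos: "\<forall>x. N x > 0"
  shows "-1 < gammaN N \<and> gammaN N < 1"
proof -
  have "\<forall>x. N differentiable (at x)"
  proof
    fix x
    have "((deriv ^^ 0) N) differentiable (at x)" using s unfolding smooth_circle_def by blast
    thus "N differentiable (at x)" by simp
  qed
  hence c: "continuous_on UNIV N"
    by (simp add: continuous_at_imp_continuous_on differentiable_imp_continuous_within)
  define Q where "Q = integral {-pi..0} N"
  define P where "P = integral {0..pi} N"
  have hQ: "(N has_integral Q) {-pi..0}" "Q > 0" using pos_integral[OF c pos, of "-pi" 0] Q_def by auto
  have hP: "(N has_integral P) {0..pi}" "P > 0" using pos_integral[OF c pos, of 0 pi] P_def by auto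
  have I: "(N has_integral (Q + P)) {-pi..pi}"
    using has_integral_combine[of "-pi" 0 pi N Q P] hQ hP pi_ge_zero by simp
  have lQ: "((\<lambda>x. lam x * N x) has_integral -Q) {-pi..0}"
  proof -
    have "((\<lambda>x. - N x) has_integral -Q) {-pi..0}" using has_integral_neg[OF hQ(1)] .
    moreover have "\<And>x. x \<in> {-pi..0} - {-pi,0} \<Longrightarrow> lam x * N x = - N x"
    proof -
      fix x assume "x \<in> {-pi..0} - {-pi,0}"
      hence "0 < -x" "-x < pi" by auto
      hence "sin x < 0" using sin_gt_zero[of "-x"] by simp
      thus "lam x * N x = - N x" by (simp add: lam_def)
    qed
    ultimately show ?thesis using has_integral_spike_finite_eq[of "{-pi,0}" "{-pi..0}" "\<lambda>x. lam x * N x" "\<lambda>x. - N x" "-Q"] by simp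
  qed
  have lP: "((\<lambda>x. lam x * N x) has_integral P) {0..pi}"
  proof -
    have "\<And>x. x \<in> {0..pi} - {0,pi} \<Longrightarrow> lam x * N x = N x"
    proof -
      fix x assume "x \<in> {0..pi} - {0,pi}"
      hence "0 < x" "x < pi" by auto
      hence "sin x > 0" using sin_gt_zero[of "x"] by simp
      thus "lam x * N x = N x" by (simp add: lam_def)
    qed
    thus ?thesis using hP(1) has_integral_spike_finite_eq[of "{0,pi}" "{0..pi}" "\<lambda>x. lam x * N x" N P] by simp
  qed
  have J: "((\<lambda>x. lam x * N x) has_integral (-Q + P)) {-pi..pi}"
    using has_integral_combine[OF _ _ lQ lP] pi_ge_zero by simp
  have "gammaN N = - (-Q + P) / (Q + P)"
    unfolding gammaN_def using integral_unique[OF I] integral_unique[OF J] by simp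
  hence g: "gammaN N * (Q + P) = Q - P" using hQ(2) hP(2) by (simp add: field_simps)
  have "- (Q + P) < gammaN N * (Q + P)" using g hQ(2) hP(2) by linarith
  hence 1: "-1 < gammaN N" using hQ(2) hP(2)
    by (metis mult_minus_left mult_less_cancel_right_pos add_pos_pos mult_1)
  have "gammaN N * (Q + P) < 1 * (Q + P)" unfolding g using hP(2) by simp
  hence 2: "gammaN N < 1" using hQ(2) hP(2) mult_less_cancel_right_pos[of "Q+P" "gammaN N" 1] by simp
  show ?thesis using 1 2 by simp
qed


lemma pointwise_bound:
  fixes C D k y P P0 R Q1 s M A h eta :: real
  assumes C: "C > 0" and k: "k > 0" and D: "D \<ge> 0" and P0: "P0 > 0" "P0 \<le> P"
    and Q1: "Q1 = R * R * P" and R: "R \<ge> 0" and s: "s \<ge> 0" and RM: "R * s < M"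
    and h: "M\<^sup>2 - A\<^sup>2 \<le> - h" and h0: "h \<ge> 0"
    and eq: "- C * y - 2 * eta\<^sup>2 * D * P - k * A\<^sup>2 * P + k * s\<^sup>2 * Q1 = 0"
  shows "y \<le> - (k * h * P0) / C"
proof -
  have P: "P > 0" using P0 by linarith
  have Cy: "C * y = - 2 * eta\<^sup>2 * D * P - k * A\<^sup>2 * P + k * P * (R * s)\<^sup>2"
    using eq Q1 by (simp add: power2_eq_square algebra_simps)
  have "0 \<le> 2 * eta\<^sup>2 * D * P" using D P by simp
  have Rs: "(R * s)\<^sup>2 \<le> M\<^sup>2"
    using R s RM by (metis mult_nonneg_nonneg order.strict_implies_order power_mono)
  have "k * P * (R * s)\<^sup>2 \<le> k * P * M\<^sup>2" using Rs k P by simp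
  hence "C * y \<le> k * P * (M\<^sup>2 - A\<^sup>2)" using Cy \<open>0 \<le> 2 * eta\<^sup>2 * D * P\<close>
    by (simp add: algebra_simps)
  also have "\<dots> \<le> k * P * (- h)" using mult_left_mono[OF h, of "k*P"] k P by simp
  also have "\<dots> \<le> k * P0 * (- h)"
  proof -
    have "k * (P0 * h) \<le> k * (P * h)" using mult_left_mono[OF mult_right_mono[OF P0(2) h0], of k] k by simp
    thus ?thesis by (simp add: algebra_simps)
  qed
  finally have "C * y \<le> - (k * h * P0)" by (simp add: algebra_simps)
  thus ?thesis using C by (simp add: field_simps)
qed

theorem proposition3p32:
  fixes n :: nat and N :: "real \<Rightarrow> real" and eta eps :: real
  assumes "n \<ge> 3"
    and "smooth_circle N" and "\<forall>x. N x > 0"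
    and "eps > 0"
  shows "\<exists>\<delta>>0. \<forall>t. \<bar>t - gammaN N\<bar> < \<delta> \<longrightarrow>
           (\<forall>d>0. \<forall>p>1. \<forall>psi. \<not> (pos_W2p_solution n N t eta 0 eps d p psi \<and> psi 0 = 1))"
proof -
  define g where "g = gammaN N"
  have g1: "-1 < g" "g < 1" using gamma_range[OF assms(2,3)] g_def by auto
  define \<delta> where "\<delta> = eps * min (1 - g) (1 + g)"
  have dpos: "\<delta> > 0" using g1 assms(4) by (simp add: \<delta>_def)
  show ?thesis
  proof (rule exI[of _ \<delta>], intro conjI allI impI notI)
    show "\<delta> > 0" by (rule dpos)
    fix t d p psi
    assume tg: "\<bar>t - gammaN N\<bar> < \<delta>" and d: "d > 0" and "p > (1::real)"
      and sol: "pos_W2p_solution n N t eta 0 eps d p psi \<and> psi 0 = 1"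
    have pos: "\<forall>x. psi x > 0" and psi0: "psi 0 = 1" using sol unfolding pos_W2p_solution_def by auto
    obtain psi2 where W: "W2p_circle_with p psi psi2"
      and AE: "AE x in lborel. eqn_lhs n N t eta 0 eps d psi psi2 x = 0"
      using sol unfolding pos_W2p_solution_def by blast
    have per: "periodic2pi psi" using W unfolding W2p_circle_with_def by blast
    obtain psi1 where der: "\<forall>x. (psi has_real_derivative psi1 x) (at x)"
      and int: "\<forall>a b. a \<le> b \<longrightarrow> (psi2 has_integral (psi1 b - psi1 a)) {a..b}"
      using W unfolding W2p_circle_with_def by blast
    have cont: "continuous_on UNIV psi"
      using der by (meson DERIV_isCont continuous_at_imp_continuous_on)
    obtain x0 where x0: "\<forall>y. psi x0 \<le> psi y" using periodic_min[OF per cont] by blast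
    have px0: "psi x0 \<le> 1" using x0 psi0 by metis
    have dx0: "psi1 x0 = 0"
      using DERIV_local_min[OF der[rule_format, of x0], of 1] x0 by simp

    define q where "q = 2 * real n / (real n - 2)"
    define k where "k = (real n - 1) / real n"
    have n3: "real n \<ge> 3" using assms(1) by simp
    have q0: "q > 0" unfolding q_def using n3 by simp
    have k0: "k > 0" unfolding k_def using n3 by simp
    define C where "C = 2 * k * q * d powr (- 2 * q / real n)"
    define D where "D = d powr (- 2 * q)"
    have C0: "C > 0" unfolding C_def using k0 q0 d by simp
    have D0: "D \<ge> 0" unfolding D_def by simp
    define a where "a = (g + 1) * (1 + eps)"
    define b where "b = (1 - g) * (1 + eps)"
    define s1 where "s1 = \<bar>t + 1\<bar>"
    define s2 where "s2 = \<bar>t - 1\<bar>"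
    have s1a: "s1 < a"
    proof -
      have "\<delta> \<le> eps * (1 + g)" unfolding \<delta>_def using assms(4) by (simp add: mult_left_mono)
      hence "\<bar>t - g\<bar> < eps * (1 + g)" using tg g_def by simp
      thus ?thesis unfolding s1_def a_def using g1 by (simp add: algebra_simps abs_if split: if_splits)
    qed
    have s2b: "s2 < b"
    proof -
      have "\<delta> \<le> eps * (1 - g)" unfolding \<delta>_def using assms(4) by (simp add: mult_left_mono)
      hence "\<bar>t - g\<bar> < eps * (1 - g)" using tg g_def by simp
      thus ?thesis unfolding s2_def b_def using g1 by (simp add: algebra_simps abs_if split: if_splits)
    qed
    have s10: "s1 \<ge> 0" "s2 \<ge> 0" unfolding s1_def s2_def by simp_all
    define M1 where "M1 = (s1 + a) / 2"
    define M2 where "M2 = (s2 + b) / 2"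
    have M1: "s1 < M1" "M1 < a" "0 \<le> M1" using s1a s10 unfolding M1_def by auto
    have M2: "s2 < M2" "M2 < b" "0 \<le> M2" using s2b s10 unfolding M2_def by auto
    define h where "h = min (a\<^sup>2 - M1\<^sup>2) (b\<^sup>2 - M2\<^sup>2)"
    have "M1\<^sup>2 < a\<^sup>2" using M1 by (simp add: power_strict_mono)
    moreover have "M2\<^sup>2 < b\<^sup>2" using M2 by (simp add: power_strict_mono)
    ultimately have h0: "h > 0" unfolding h_def by simp
    have hM1: "M1\<^sup>2 - a\<^sup>2 \<le> - h" and hM2: "M2\<^sup>2 - b\<^sup>2 \<le> - h" unfolding h_def by auto
    define P0 where "P0 = 2 powr (- q - 1)"
    have P00: "P0 > 0" unfolding P0_def by simp
    define c where "c = k * h * P0 / C"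
    have c0: "c > 0" unfolding c_def using k0 h0 P00 C0 by simp
    have lim0: "(psi \<longlongrightarrow> psi x0) (at x0)"
      using der DERIV_isCont isCont_def by blast
    have limq: "((\<lambda>x. psi x powr q) \<longlongrightarrow> psi x0 powr q) (at x0)"
      using tendsto_powr[OF lim0 tendsto_const, of q] pos[rule_format, of x0] by simp
    have pq1: "psi x0 powr q \<le> 1" using px0 pos[rule_format, of x0] q0 by (intro powr_le1) auto
    have ev1: "eventually (\<lambda>x. psi x < 2) (at x0)"
      using order_tendstoD(2)[OF lim0] px0 by simp
    have ev2: "eventually (\<lambda>x. psi x powr q * s1 < M1) (at x0)"
    proof -
      have "psi x0 powr q * s1 \<le> s1" using pq1 s10 by (simp add: mult_left_le_one_le)
      thus ?thesis using order_tendstoD(2)[OF tendsto_mult_right[OF limq, of s1]] M1 by simp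
    qed
    have ev3: "eventually (\<lambda>x. psi x powr q * s2 < M2) (at x0)"
    proof -
      have "psi x0 powr q * s2 \<le> s2" using pq1 s10 by (simp add: mult_left_le_one_le)
      thus ?thesis using order_tendstoD(2)[OF tendsto_mult_right[OF limq, of s2]] M2 by simp
    qed
    obtain e where e0: "e > 0" and eP: "\<forall>x. x \<noteq> x0 \<and> dist x x0 < e \<longrightarrow>
        psi x < 2 \<and> psi x powr q * s1 < M1 \<and> psi x powr q * s2 < M2"
      using eventually_conj[OF ev1 eventually_conj[OF ev2 ev3]] unfolding eventually_at by auto
    have nb: "psi x < 2 \<and> psi x powr q * s1 < M1 \<and> psi x powr q * s2 < M2" if "dist x x0 < e" for x
    proof (cases "x = x0")
      case True
      have "psi x0 powr q * s1 \<le> s1" "psi x0 powr q * s2 \<le> s2"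
        using pq1 s10 by (simp_all add: mult_left_le_one_le)
      then show ?thesis using True px0 M1 M2 by simp
    next
      case False then show ?thesis using eP that by blast
    qed
    have pw: "psi2 x \<le> - c" if ex: "eqn_lhs n N t eta 0 eps d psi psi2 x = 0"
      and sx: "sin x \<noteq> 0" and dx: "dist x x0 < e" for x
    proof -
      have E: "- C * psi2 x - 2 * eta\<^sup>2 * D * psi x powr (- q - 1)
          - k * ((g + lam x) * (1 + eps))\<^sup>2 * psi x powr (- q - 1)
          + k * (t + lam x)\<^sup>2 * psi x powr (q - 1) = 0"
      proof -
        have E0: "- 2 * k * q * d powr (- 2 * q / real n) * psi2 x
       - 2 * eta\<^sup>2 * d powr (- 2 * q) * psi x powr (- q - 1)
       - k * ((g + lam x) * (1 + eps) + d powr (- q) * 0)\<^sup>2 * psi x powr (- q - 1)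
       + k * (t + lam x)\<^sup>2 * psi x powr (q - 1) = 0"
          using ex unfolding eqn_lhs_def Let_def q_def[symmetric] k_def[symmetric] g_def[symmetric] .
        show ?thesis using E0 unfolding C_def D_def by (simp add: algebra_simps)
      qed
      have Q1: "psi x powr (q - 1) = psi x powr q * psi x powr q * psi x powr (- q - 1)"
        using pos by (simp add: powr_add[symmetric])
      have PP: "P0 \<le> psi x powr (- q - 1)"
        unfolding P0_def using nb[OF dx] pos q0
        by (intro powr_mono2') auto
      have Rg: "psi x powr q \<ge> 0" by simp
      show ?thesis
      proof (cases "sin x < 0")
        case True
        hence l: "lam x = -1" by (simp add: lam_def)
        have A: "((g + lam x) * (1 + eps))\<^sup>2 = b\<^sup>2" unfolding l b_def by (simp add: power2_eq_square algebra_simps)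
        have T: "(t + lam x)\<^sup>2 = s2\<^sup>2" unfolding l s2_def by simp
        have "psi2 x \<le> - (k * h * P0) / C"
          by (rule pointwise_bound[OF C0 k0 D0 P00 PP Q1 Rg s10(2) _ hM2 order.strict_implies_order[OF h0]])
            (use nb[OF dx] E A T in auto)
        thus ?thesis unfolding c_def by simp
      next
        case False
        hence l: "lam x = 1" using sx by (simp add: lam_def)
        have A: "((g + lam x) * (1 + eps))\<^sup>2 = a\<^sup>2" unfolding l a_def by (simp add: algebra_simps)
        have T: "(t + lam x)\<^sup>2 = s1\<^sup>2" unfolding l s1_def by simp
        have "psi2 x \<le> - (k * h * P0) / C"
          by (rule pointwise_bound[OF C0 k0 D0 P00 PP Q1 Rg s10(1) _ hM1 order.strict_implies_order[OF h0]])
            (use nb[OF dx] E A T in auto)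
        thus ?thesis unfolding c_def by simp
      qed
    qed
    obtain N0 where N0: "{x \<in> space lborel. \<not> eqn_lhs n N t eta 0 eps d psi psi2 x = 0} \<subseteq> N0"
      "emeasure lborel N0 = 0" "N0 \<in> sets lborel"
      using AE by (rule AE_E)
    have negN0: "negligible N0"
      unfolding negligible_iff_null_sets using N0 by (intro null_sets_completionI null_setsI)
    have negS: "negligible {x::real. sin x = 0}"
    proof -
      have "{x::real. sin x = 0} = \<Union>((\<lambda>i::int. {of_int i * pi}) ` UNIV)"
        by (auto simp: sin_zero_iff_int2)
      moreover have "negligible (\<Union>((\<lambda>i::int. {of_int i * pi}) ` UNIV))"
        by (rule negligible_countable_Union) auto
      ultimately show ?thesis by simp
    qed
    define Bad where "Bad = N0 \<union> {x::real. sin x = 0}"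
    have negB: "negligible Bad" unfolding Bad_def using negN0 negS by simp
    have dec: "psi1 y < 0" if y: "x0 < y" "y < x0 + e" for y
    proof -
      define G where "G = (\<lambda>x. if x \<in> Bad then - c else psi2 x)"
      have hi: "(G has_integral (psi1 y - psi1 x0)) {x0..y}"
        by (rule has_integral_spike[OF negB _ int[rule_format]]) (use y in \<open>auto simp: G_def\<close>)
      have "psi1 y - psi1 x0 \<le> Henstock_Kurzweil_Integration.content {x0..y} *\<^sub>R (- c)"
      proof (rule has_integral_le[OF hi has_integral_const_real])
        fix x assume x: "x \<in> {x0..y}"
        show "G x \<le> - c"
        proof (cases "x \<in> Bad")
          case True then show ?thesis by (simp add: G_def)
        next
          case False
          hence "eqn_lhs n N t eta 0 eps d psi psi2 x = 0" "sin x \<noteq> 0"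
            using N0(1) unfolding Bad_def by auto
          moreover have "dist x x0 < e" using x y by (simp add: dist_real_def)
          ultimately show ?thesis using pw False by (simp add: G_def)
        qed
      qed
      also have "\<dots> < 0" using y c0 by simp
      finally show ?thesis using dx0 by simp
    qed
    obtain z where z: "x0 < z" "z < x0 + e/2" "psi (x0 + e/2) - psi x0 = (x0 + e/2 - x0) * psi1 z"
      using MVT2[of x0 "x0 + e/2" psi psi1] der e0 by auto
    have "psi1 z < 0" using dec[of z] z e0 by simp
    hence "(e/2) * psi1 z < 0" using e0 by (simp add: mult_pos_neg)
    hence "psi (x0 + e/2) < psi x0" using z(3) by simp
    thus False using x0 by (metis not_le)
  qed
qed

end
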